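(* Let $\mathcal{S}=\{S_1,\dots,S_N\}\subset\mathbb{R}^Q_{\ge0}$, let $\Delta$ be a diagonal matrix with positive diagonal entries, and let $\rho\in\mathbb{R}^Q$ with all $\rho_q>0$ satisfy $\rho\notin\mathcal{P}$. Then there exists exactly one vector $\eta$ (a "fixed point") such that $$\eta=\Big[\rho-\sum_m\alpha_mS_m\Big]^+,\quad \alpha_m\ge0,\quad \sum_m\alpha_m=1,\quad \alpha_m>0\implies\langle\eta,\Delta S_m\rangle\ge\langle\eta,\Delta S_k\rangle\ \ \forall k.$$
   Context: $[x]^+$ is the componentwise positive part; $\langle x,y\rangle=\sum_qx_qy_q$. Stability region $\mathcal{P}=\{r\in\mathbb{R}^Q_{\ge0}: r\le\sum_n\alpha_nS_n\text{ componentwise for some }\alpha_n\ge0,\sum_n\alpha_n=1\}$. *)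

theory Defs
  imports "HOL-Analysis.Analysis"
begin

definition pos_part :: "real^'q \<Rightarrow> real^'q" where
  "pos_part x = (\<chi> q. max (x $ q) 0)"

definition stab_region :: "('m::finite \<Rightarrow> real^'q) \<Rightarrow> (real^'q) set" where
  "stab_region S = {r. (\<forall>q. 0 \<le> r $ q) \<and>
     (\<exists>\<alpha>::'m \<Rightarrow> real. (\<forall>n. 0 \<le> \<alpha> n) \<and> (\<Sum>n\<in>UNIV. \<alpha> n) = 1 \<and>
        (\<forall>q. r $ q \<le> (\<Sum>n\<in>UNIV. \<alpha> n *\<^sub>R S n) $ q))}"

end

theory Submission
  imports Defs
begin

lemma inner_diag:
  fixes D :: "real^'q^'q"
  assumes D_diag: "\<forall>i j. i \<noteq> j \<longrightarrow> D $ i $ j = 0"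
  shows "v \<bullet> (D *v w) = (\<Sum>q\<in>UNIV. D$q$q * v$q * w$q)"
proof -
  have "(D *v w) $ i = D$i$i * w$i" for i
    unfolding matrix_vector_mult_def
    using D_diag by (simp add: if_distrib sum.If_cases) (subst sum.remove[of _ i], auto)
  then show ?thesis unfolding inner_vec_def by (simp add: mult.commute mult.left_commute)
qed

lemma h_bound: "(max (u + d) 0)^2 \<le> (max u 0)^2 + 2 * max u 0 * d + d^2" for u d :: real
proof -
  consider "u + d \<le> 0" "u \<le> 0" | "u + d \<le> 0" "u > 0" | "u+d > 0" "u > 0" | "u + d > 0" "u \<le> 0" by linarith
  then show ?thesis
  proof cases
    case 1 then show ?thesis by simp
  next
    case 2 then have "(max u 0)^2 + 2 * max u 0 * d + d^2 = (u+d)^2" by (simp add: power2_eq_square algebra_simps)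
    then show ?thesis using 2 by simp
  next
    case 3 then show ?thesis by (simp add: power2_eq_square algebra_simps)
  next
    case 4 then have "(u+d)^2 \<le> d^2" by (intro power_mono) auto
    then show ?thesis using 4 by simp
  qed
qed
lemma pos_mono: "(max (r - x1) 0 - max (r - x2) 0) * (x1 - x2) + (max (r - x1) 0 - max (r - x2) 0)^2 \<le> 0"
  for r x1 x2 :: real
proof -
  consider "r - x1 \<le> 0" "r - x2 \<le> 0" | "r - x1 \<le> 0" "r - x2 > 0" | "r - x1 > 0" "r - x2 \<le> 0" | "r - x1 > 0" "r - x2 > 0" by linarith
  then show ?thesis
  proof cases
    case 1 then show ?thesis by simp
  next
    case 2
    have "(max (r - x1) 0 - max (r - x2) 0) * (x1 - x2) + (max (r - x1) 0 - max (r - x2) 0)^2 = (r-x2)*(r-x1)"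
      using 2 by (simp add: power2_eq_square algebra_simps)
    also have "\<dots> \<le> 0" using 2 by (intro mult_nonneg_nonpos) auto
    finally show ?thesis .
  next
    case 3
    have "(max (r - x1) 0 - max (r - x2) 0) * (x1 - x2) + (max (r - x1) 0 - max (r - x2) 0)^2 = (r-x1)*(r-x2)"
      using 3 by (simp add: power2_eq_square algebra_simps)
    also have "\<dots> \<le> 0" using 3 by (intro mult_nonneg_nonpos) auto
    finally show ?thesis .
  next
    case 4 then show ?thesis by (simp add: power2_eq_square algebra_simps)
  qed
qed

lemma d1: "(\<Sum>i\<in>(UNIV::'m::finite set). (if i = j then c else 0) *\<^sub>R (S i :: real^'q)) = c *\<^sub>R S j"
proof -
  have "(\<Sum>i\<in>(UNIV::'m set). (if i = j then c else 0) *\<^sub>R S i) = (\<Sum>i\<in>UNIV. if i = j then c *\<^sub>R S j else 0)"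
    by (rule sum.cong) auto
  also have "\<dots> = c *\<^sub>R S j" by simp
  finally show ?thesis .
qed
theorem lemma10:
  fixes S :: "'m::finite \<Rightarrow> real^'q"
    and D :: "real^'q^'q"
    and \<rho> :: "real^'q"
  assumes S_nonneg: "\<forall>m q. 0 \<le> S m $ q"
    and D_diag: "\<forall>i j. i \<noteq> j \<longrightarrow> D $ i $ j = 0"
    and D_pos: "\<forall>i. 0 < D $ i $ i"
    and rho_pos: "\<forall>q. 0 < \<rho> $ q"
    and rho_out: "\<rho> \<notin> stab_region S"
  shows "\<exists>!\<eta>. \<exists>\<alpha>::'m \<Rightarrow> real.
            \<eta> = pos_part (\<rho> - (\<Sum>m\<in>UNIV. \<alpha> m *\<^sub>R S m)) \<and>
            (\<forall>m. 0 \<le> \<alpha> m) \<and> (\<Sum>m\<in>UNIV. \<alpha> m) = 1 \<and>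
            (\<forall>m. 0 < \<alpha> m \<longrightarrow> (\<forall>k. \<eta> \<bullet> (D *v S m) \<ge> \<eta> \<bullet> (D *v S k)))"
proof (rule ex_ex1I)
  show "\<exists>\<eta> \<alpha>. \<eta> = pos_part (\<rho> - (\<Sum>m\<in>UNIV. \<alpha> m *\<^sub>R S m)) \<and>
            (\<forall>m. 0 \<le> \<alpha> m) \<and> (\<Sum>m\<in>UNIV. \<alpha> m) = 1 \<and>
            (\<forall>m. 0 < \<alpha> m \<longrightarrow> (\<forall>k. \<eta> \<bullet> (D *v S m) \<ge> \<eta> \<bullet> (D *v S k)))"
proof -
    define T where "T = {a::real^'m. (\<forall>i. 0 \<le> a$i) \<and> (\<Sum>i\<in>UNIV. a$i) = 1}"
    define X where "X = (\<lambda>a::real^'m. \<Sum>m\<in>UNIV. a$m *\<^sub>R S m)"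
    define F where "F = (\<lambda>a. \<Sum>q\<in>UNIV. D$q$q * (max ((\<rho> - X a)$q) 0)^2)"
    have Tsub: "T \<subseteq> cbox 0 1"
    proof
      fix a assume "a \<in> T"
      then have "0 \<le> a$i \<and> a$i \<le> 1" for i
        unfolding T_def using member_le_sum[of i UNIV "\<lambda>i. a$i"] by auto
      then show "a \<in> cbox 0 1" by (simp add: mem_box_cart)
    qed
    have "closed T" unfolding T_def
      by (intro closed_Collect_conj closed_Collect_all closed_Collect_le closed_Collect_eq continuous_intros)
    have TT: "T = cbox 0 1 \<inter> T" using Tsub by blast
    have cT: "compact T" by (subst TT) (rule compact_Int_closed[OF compact_cbox \<open>closed T\<close>])
    obtain i0 :: 'm where True by blast
    have "(\<chi> i. if i = i0 then 1 else 0) \<in> T" unfolding T_def by simp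
    then have neT: "T \<noteq> {}" by blast
    have cF: "continuous_on T F" unfolding F_def X_def
      by (intro continuous_intros)
    obtain a0 where a0T: "a0 \<in> T" and amin: "\<forall>y\<in>T. F a0 \<le> F y"
      using continuous_attains_inf[OF cT neT cF] by blast
    define \<eta> where "\<eta> = pos_part (\<rho> - X a0)"
    have KKT: "\<eta> \<bullet> (D *v S k) \<le> \<eta> \<bullet> (D *v S m)" if am: "0 < a0$m" for m k
    proof (rule ccontr)
      assume neg: "\<not> ?thesis"
      define g where "g = \<eta> \<bullet> (D *v S k) - \<eta> \<bullet> (D *v S m)"
      have g0: "g > 0" using neg g_def by simp
      then have km: "k \<noteq> m" using g_def by auto
      define w where "w = S k - S m"
      define C where "C = (\<Sum>q\<in>UNIV. D$q$q * (w$q)^2)"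
      have C0: "C \<ge> 0" unfolding C_def using D_pos by (intro sum_nonneg) (simp add: less_imp_le)
      define t where "t = min (a0$m) (g/(C+1))"
      have t0: "t > 0" unfolding t_def using am g0 C0 by simp
      have "t \<le> g/(C+1)" unfolding t_def by simp
      then have tg: "t * (C+1) \<le> g" using C0 by (simp add: le_divide_eq)
      have tC: "t * C < g" using tg t0 by (simp add: algebra_simps)
      define bt where "bt = (\<chi> i. a0$i + (if i = k then t else 0) - (if i = m then t else 0))"
      have btT: "bt \<in> T"
      proof -
        have "0 \<le> bt$i" for i
          using a0T km t_def unfolding T_def bt_def
          by (cases "i = m"; cases "i = k") (auto, smt (verit) t0)
        moreover have "(\<Sum>i\<in>UNIV. bt$i) = 1"
          using a0T unfolding T_def bt_def by (simp add: sum.distrib sum_subtractf)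
        ultimately show ?thesis unfolding T_def by blast
      qed
      have Xbt: "X bt = X a0 + t *\<^sub>R w"
      proof -
        have "X bt = (\<Sum>i\<in>UNIV. a0$i *\<^sub>R S i + (if i = k then t else 0) *\<^sub>R S i
                    - (if i = m then t else 0) *\<^sub>R S i)"
          unfolding X_def bt_def by (simp only: vec_lambda_beta scaleR_add_left scaleR_diff_left)
        also have "\<dots> = X a0 + t *\<^sub>R S k - t *\<^sub>R S m"
          unfolding X_def by (simp only: sum.distrib sum_subtractf d1)
        finally show ?thesis unfolding w_def by (simp add: scaleR_diff_right)
      qed
      have "F bt \<le> (\<Sum>q\<in>UNIV. D$q$q * ((max ((\<rho> - X a0)$q) 0)^2
               + 2 * max ((\<rho> - X a0)$q) 0 * (- t * w$q) + (- t * w$q)^2))"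
        unfolding F_def
      proof (rule sum_mono)
        fix q assume "q \<in> (UNIV::'q set)"
        have "(\<rho> - X bt)$q = (\<rho> - X a0)$q + (- t * w$q)" by (simp add: Xbt)
        then have "(max ((\<rho> - X bt)$q) 0)^2 \<le> (max ((\<rho> - X a0)$q) 0)^2
               + 2 * max ((\<rho> - X a0)$q) 0 * (- t * w$q) + (- t * w$q)^2"
          by (simp only:) (rule h_bound)
        then show "D$q$q * (max ((\<rho> - X bt)$q) 0)^2 \<le> D$q$q * ((max ((\<rho> - X a0)$q) 0)^2
               + 2 * max ((\<rho> - X a0)$q) 0 * (- t * w$q) + (- t * w$q)^2)"
          using D_pos by (simp add: mult_left_mono less_imp_le)
      qed
      also have "\<dots> = F a0 - 2 * t * (\<Sum>q\<in>UNIV. D$q$q * \<eta>$q * w$q) + t * (t * C)"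
        unfolding F_def C_def \<eta>_def pos_part_def
        by (simp add: algebra_simps sum.distrib sum_distrib_left sum_subtractf power2_eq_square)
      also have "(\<Sum>q\<in>UNIV. D$q$q * \<eta>$q * w$q) = g"
        unfolding g_def inner_diag[OF D_diag] w_def
        by (simp add: algebra_simps sum_subtractf)
      finally have "F bt \<le> F a0 - 2 * t * g + t * (t * C)" .
      moreover have "t * (t * C) < t * g" using tC t0 by simp
      moreover have "0 < t * g" using t0 g0 by simp
      moreover have "2 * t * g = 2 * (t * g)" by simp
      ultimately have "F bt < F a0" by linarith
      moreover have "F a0 \<le> F bt" using amin btT by blast
      ultimately show False by linarith
    qed
    show ?thesis
    proof (intro exI conjI)
      show "\<eta> = pos_part (\<rho> - (\<Sum>m\<in>UNIV. a0$m *\<^sub>R S m))" unfolding \<eta>_def X_def ..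
      show "\<forall>m. 0 \<le> a0$m" using a0T T_def by blast
      show "(\<Sum>m\<in>UNIV. a0$m) = 1" using a0T T_def by blast
      show "\<forall>m. 0 < a0$m \<longrightarrow> (\<forall>k. \<eta> \<bullet> (D *v S k) \<le> \<eta> \<bullet> (D *v S m))" using KKT by blast
    qed
  qed
next
  fix \<eta>1 \<eta>2
  assume "\<exists>\<alpha>::'m \<Rightarrow> real.
            \<eta>1 = pos_part (\<rho> - (\<Sum>m\<in>UNIV. \<alpha> m *\<^sub>R S m)) \<and>
            (\<forall>m. 0 \<le> \<alpha> m) \<and> (\<Sum>m\<in>UNIV. \<alpha> m) = 1 \<and>
            (\<forall>m. 0 < \<alpha> m \<longrightarrow> (\<forall>k. \<eta>1 \<bullet> (D *v S m) \<ge> \<eta>1 \<bullet> (D *v S k)))"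
  then obtain \<alpha>1 :: "'m \<Rightarrow> real" where e1: "\<eta>1 = pos_part (\<rho> - (\<Sum>m\<in>UNIV. \<alpha>1 m *\<^sub>R S m))"
    and n1: "\<forall>m. 0 \<le> \<alpha>1 m" and s1: "(\<Sum>m\<in>UNIV. \<alpha>1 m) = 1"
    and k1: "\<forall>m. 0 < \<alpha>1 m \<longrightarrow> (\<forall>k. \<eta>1 \<bullet> (D *v S m) \<ge> \<eta>1 \<bullet> (D *v S k))" by blast
  assume "\<exists>\<alpha>::'m \<Rightarrow> real.
            \<eta>2 = pos_part (\<rho> - (\<Sum>m\<in>UNIV. \<alpha> m *\<^sub>R S m)) \<and>
            (\<forall>m. 0 \<le> \<alpha> m) \<and> (\<Sum>m\<in>UNIV. \<alpha> m) = 1 \<and>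
            (\<forall>m. 0 < \<alpha> m \<longrightarrow> (\<forall>k. \<eta>2 \<bullet> (D *v S m) \<ge> \<eta>2 \<bullet> (D *v S k)))"
  then obtain \<alpha>2 :: "'m \<Rightarrow> real" where e2: "\<eta>2 = pos_part (\<rho> - (\<Sum>m\<in>UNIV. \<alpha>2 m *\<^sub>R S m))"
    and n2: "\<forall>m. 0 \<le> \<alpha>2 m" and s2: "(\<Sum>m\<in>UNIV. \<alpha>2 m) = 1"
    and k2: "\<forall>m. 0 < \<alpha>2 m \<longrightarrow> (\<forall>k. \<eta>2 \<bullet> (D *v S m) \<ge> \<eta>2 \<bullet> (D *v S k))" by blast
  define x1 where "x1 = (\<Sum>m\<in>UNIV. \<alpha>1 m *\<^sub>R S m)"
  define x2 where "x2 = (\<Sum>m\<in>UNIV. \<alpha>2 m *\<^sub>R S m)"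
  have lin: "\<eta> \<bullet> (D *v (\<Sum>m\<in>UNIV. a m *\<^sub>R S m)) = (\<Sum>m\<in>UNIV. a m * (\<eta> \<bullet> (D *v S m)))"
    for \<eta> and a :: "'m \<Rightarrow> real"
    by (simp add: linear_sum[OF matrix_vector_mul_linear] matrix_vector_mult_scaleR inner_sum_right)
  have key: "\<eta> \<bullet> (D *v (\<Sum>m\<in>UNIV. a m *\<^sub>R S m)) \<ge> \<eta> \<bullet> (D *v (\<Sum>m\<in>UNIV. b m *\<^sub>R S m))"
    if na: "\<forall>m. 0 \<le> a m" and sa: "(\<Sum>m\<in>UNIV. a m) = 1"
      and ka: "\<forall>m. 0 < a m \<longrightarrow> (\<forall>k. \<eta> \<bullet> (D *v S m) \<ge> \<eta> \<bullet> (D *v S k))"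
      and nb: "\<forall>m. 0 \<le> b m" and sb: "(\<Sum>m\<in>UNIV. b m) = 1"
    for \<eta> and a b :: "'m \<Rightarrow> real"
  proof -
    let ?v = "\<lambda>m. \<eta> \<bullet> (D *v S m)"
    let ?A = "\<Sum>m\<in>UNIV. a m * ?v m"
    have vk: "?v k \<le> ?A" for k
    proof -
      have "(\<Sum>m\<in>UNIV. a m * ?v k) \<le> ?A"
      proof (rule sum_mono)
        fix m assume "m \<in> (UNIV::'m set)"
        show "a m * ?v k \<le> a m * ?v m"
        proof (cases "a m = 0")
          case False
          then have "0 < a m" using na by (metis order_le_less)
          then show ?thesis using ka by (simp add: mult_left_mono less_imp_le)
        qed simp
      qed
      then show ?thesis using sa by (simp add: sum_distrib_right[symmetric])
    qed
    have "(\<Sum>k\<in>UNIV. b k * ?v k) \<le> (\<Sum>k\<in>UNIV. b k * ?A)"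
      by (rule sum_mono) (use nb vk in \<open>auto intro: mult_left_mono\<close>)
    also have "\<dots> = ?A" using sb by (simp add: sum_distrib_right[symmetric])
    finally show ?thesis unfolding lin .
  qed
  have A: "\<eta>1 \<bullet> (D *v x1) \<ge> \<eta>1 \<bullet> (D *v x2)" unfolding x1_def x2_def
    by (rule key) (use n1 s1 k1 n2 s2 in auto)
  have B: "\<eta>2 \<bullet> (D *v x2) \<ge> \<eta>2 \<bullet> (D *v x1)" unfolding x1_def x2_def
    by (rule key) (use n1 s1 k2 n2 s2 in auto)
  have C: "0 \<le> (\<Sum>q\<in>UNIV. D$q$q * (\<eta>1$q - \<eta>2$q) * (x1$q - x2$q))"
    using A B unfolding inner_diag[OF D_diag]
    by (simp add: algebra_simps sum.distrib sum_subtractf)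
  have P: "D$q$q * (\<eta>1$q - \<eta>2$q) * (x1$q - x2$q) + D$q$q * (\<eta>1$q - \<eta>2$q)^2 \<le> 0" for q
  proof -
    have "(\<eta>1$q - \<eta>2$q) * (x1$q - x2$q) + (\<eta>1$q - \<eta>2$q)^2 \<le> 0"
      using pos_mono[of "\<rho>$q" "x1$q" "x2$q"]
      by (simp add: e1 e2 x1_def[symmetric] x2_def[symmetric] pos_part_def)
    then have "D$q$q * ((\<eta>1$q - \<eta>2$q) * (x1$q - x2$q) + (\<eta>1$q - \<eta>2$q)^2) \<le> 0"
      using D_pos by (simp add: mult_nonneg_nonpos less_imp_le)
    then show ?thesis by (simp add: algebra_simps)
  qed
  have Z: "(\<Sum>q\<in>UNIV. D$q$q * (\<eta>1$q - \<eta>2$q)^2) \<le> 0"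
  proof -
    have "(\<Sum>q\<in>UNIV. D$q$q * (\<eta>1$q - \<eta>2$q) * (x1$q - x2$q) + D$q$q * (\<eta>1$q - \<eta>2$q)^2) \<le> 0"
      by (rule sum_nonpos) (use P in auto)
    then show ?thesis using C by (simp add: sum.distrib)
  qed
  have "\<forall>q. D$q$q * (\<eta>1$q - \<eta>2$q)^2 = 0"
  proof -
    have nn: "\<And>q. q \<in> UNIV \<Longrightarrow> 0 \<le> D$q$q * (\<eta>1$q - \<eta>2$q)^2" using D_pos by (simp add: less_imp_le)
    have "0 \<le> (\<Sum>q\<in>UNIV. D$q$q * (\<eta>1$q - \<eta>2$q)^2)" by (rule sum_nonneg) (rule nn)
    then have "(\<Sum>q\<in>UNIV. D$q$q * (\<eta>1$q - \<eta>2$q)^2) = 0" using Z by linarith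
    then show ?thesis using sum_nonneg_eq_0_iff[of UNIV "\<lambda>q. D$q$q * (\<eta>1$q - \<eta>2$q)^2"] nn by simp
  qed
  then show "\<eta>1 = \<eta>2" using D_pos by (simp add: vec_eq_iff) (metis less_irrefl)
qed

end
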